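(* (i) If $\alpha=\beta=0$, then $z_\alpha=z_\beta=1$; in particular $x_{\rm lavs}(h_1,h_2)=x_{\rm peak}(h_1,h_2)$ and $x_{\rm gloom}(h_1,h_2)=x_{\rm valy}(h_1,h_2)$. As $\alpha\to1/\delta$, $z_\alpha\to0$; as $\beta\to+\infty$, $z_\beta\to+\infty$. (ii) For fixed $h_1\ge h_2>0$ (and all other parameters fixed), as the risk-aversion parameter $\gamma\to\infty$, $$\lim_{\gamma\to\infty}\frac{x_{\rm lavs}(h_1,h_2)}{c^*(x_{\rm lavs}(h_1,h_2),h_1,h_2)}=\lim_{\gamma\to\infty}\frac{x_{\rm gloom}(h_1,h_2)}{c^*(x_{\rm gloom}(h_1,h_2),h_1,h_2)}=\frac1r.$$
   Context: Parameters: $r>0$, $\mu>0$, $\sigma>0$, $\kappa=(\mu-r)/\sigma$, $\delta>0$, $\gamma>0,\gamma\ne1$, $0\le\alpha\le1/\delta$, $\beta\ge0$, $K_0:=r+\frac{\delta-r}{\gamma}+\frac{\gamma-1}{2\gamma^2}\kappa^2>0$. $\gamma^*=-(1-\gamma)/\gamma$; $m_1>1$ and $m_2<\min(\gamma^*,0)$ are the roots of $\frac{\kappa^2}{2}m^2+(\delta-r-\frac{\kappa^2}{2})m-\delta=0$; $z_\alpha\in(0,1-\alpha\delta]$ solves $\frac{2}{\kappa^2m_1(m_1-1)}z^{m_1}+\frac{z}{r}(m_2-1)+m_2(\alpha-\frac1\delta)=0$; $z_\beta\in[1+\beta\delta,\infty)$ solves $\frac{2}{\kappa^2m_2(m_2-1)}z^{m_2}+\frac{z}{r}(m_1-1)-m_1(\beta+\frac1\delta)=0$.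 Coefficients: $C_5(h_2)=\frac{1-\gamma^*}{(m_1-m_2)(m_1-\gamma^* )}\big(\frac{m_2(\beta\delta+1)}{\delta}z_\beta^{-m_1}+\frac{1-m_2}{r}z_\beta^{1-m_1}\big)h_2^{1+\gamma(m_1-1)}$; $C_3(h_2)=C_5(h_2)+\frac{2(\gamma^*-1)}{\kappa^2(m_1-m_2)m_1(m_1-1)(m_1-\gamma^* )}h_2^{1+\gamma(m_1-1)}$; $C_1(h_1,h_2)=C_3(h_2)+\frac{2(1-\gamma^* )}{\kappa^2(m_1-m_2)m_1(m_1-1)(m_1-\gamma^* )}h_1^{1+\gamma(m_1-1)}$; $C_2(h_1)=\frac{1-\gamma^*}{(m_1-m_2)(m_2-\gamma^* )}\big(\frac{m_1(\alpha\delta-1)}{\delta}z_\alpha^{-m_2}+\frac{m_1-1}{r}z_\alpha^{1-m_2}\big)h_1^{1+\gamma(m_2-1)}$; $C_4(h_1)=C_2(h_1)-\frac{2(\gamma^*-1)}{\kappa^2(m_1-m_2)m_2(m_2-1)(m_2-\gamma^* )}h_1^{1+\gamma(m_2-1)}$; $C_6(h_1,h_2)=C_4(h_1)-\frac{2(1-\gamma^* )}{\kappa^2(m_1-m_2)m_2(m_2-1)(m_2-\gamma^* )}h_2^{1+\gamma(m_2-1)}$. Boundary curves: $x_{\rm lavs}=-m_1C_1(h_1,h_2)(z_\alpha h_1^{-\gamma})^{m_1-1}-m_2C_2(h_1)(z_\alpha h_1^{-\gamma})^{m_2-1}+\frac{h_1}{r}$; $x_{\rm peak}=-m_1C_1(h_1,h_2)(h_1^{-\gamma})^{m_1-1}-m_2C_2(h_1)(h_1^{-\gamma})^{m_2-1}+\frac{h_1}{r}$;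 $x_{\rm valy}=-m_1C_5(h_2)(h_2^{-\gamma})^{m_1-1}-m_2C_6(h_1,h_2)(h_2^{-\gamma})^{m_2-1}+\frac{h_2}{r}$; $x_{\rm gloom}=-m_1C_5(h_2)(z_\beta h_2^{-\gamma})^{m_1-1}-m_2C_6(h_1,h_2)(z_\beta h_2^{-\gamma})^{m_2-1}+\frac{h_2}{r}$. The optimal feedback consumption $c^*(x,h_1,h_2)$ (for the problem of maximizing $\mathbb E[\int_0^\infty e^{-\delta t}(U(c_t)dt-\alpha dV^+_{1t}-\beta dV^-_{2t})]$ with $U=V=x^{1-\gamma}/(1-\gamma)$, $V^+_{1t}=V(h_1\vee\sup_{s\le t}c_s)-V(h_1)$, $V^-_{2t}=V(h_2)-V(h_2\wedge\inf_{s\le t}c_s)$, over consumption/investment strategies with wealth $dX=(rX+(\mu-r)\pi-c)dt+\sigma\pi dW$, $X\ge0$) satisfies $c^*(x,h_1,h_2)=h_1$ for $x_{\rm peak}<x\le x_{\rm lavs}$ and $c^*(x,h_1,h_2)=h_2$ for $x_{\rm gloom}\le x<x_{\rm valy}$. *)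

theory Defs
  imports "HOL-Analysis.Analysis"
begin

text \<open>Market parameters: r (interest), mu (drift), sig (volatility sigma), delta (discount).\<close>

definition kap :: "real \<Rightarrow> real \<Rightarrow> real \<Rightarrow> real" where
  "kap r mu sig = (mu - r) / sig"

definition gstar :: "real \<Rightarrow> real" where
  "gstar gamma = - (1 - gamma) / gamma"

definition K0 :: "real \<Rightarrow> real \<Rightarrow> real \<Rightarrow> real \<Rightarrow> real \<Rightarrow> real" where
  "K0 r mu sig delta gamma =
     r + (delta - r) / gamma + (gamma - 1) / (2 * gamma\<^sup>2) * (kap r mu sig)\<^sup>2"

definition charpoly :: "real \<Rightarrow> real \<Rightarrow> real \<Rightarrow> real \<Rightarrow> real \<Rightarrow> real" where
  "charpoly r mu sig delta m =
     (kap r mu sig)\<^sup>2 / 2 * m\<^sup>2 + (delta - r - (kap r mu sig)\<^sup>2 / 2) * m - delta"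

definition m1 :: "real \<Rightarrow> real \<Rightarrow> real \<Rightarrow> real \<Rightarrow> real" where
  "m1 r mu sig delta = (THE m. m > 1 \<and> charpoly r mu sig delta m = 0)"

definition m2 :: "real \<Rightarrow> real \<Rightarrow> real \<Rightarrow> real \<Rightarrow> real" where
  "m2 r mu sig delta = (THE m. m < 0 \<and> charpoly r mu sig delta m = 0)"

definition zal :: "real \<Rightarrow> real \<Rightarrow> real \<Rightarrow> real \<Rightarrow> real \<Rightarrow> real" where
  "zal r mu sig delta alpha =
    (let k = kap r mu sig; a = m1 r mu sig delta; b = m2 r mu sig delta in
     THE z. 0 < z \<and> z \<le> 1 - alpha * delta \<and>
       2 / (k\<^sup>2 * a * (a - 1)) * z powr a + z / r * (b - 1) + b * (alpha - 1 / delta) = 0)"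

definition zbe :: "real \<Rightarrow> real \<Rightarrow> real \<Rightarrow> real \<Rightarrow> real \<Rightarrow> real" where
  "zbe r mu sig delta beta =
    (let k = kap r mu sig; a = m1 r mu sig delta; b = m2 r mu sig delta in
     THE z. 1 + beta * delta \<le> z \<and>
       2 / (k\<^sup>2 * b * (b - 1)) * z powr b + z / r * (a - 1) - a * (beta + 1 / delta) = 0)"

definition C5 :: "real \<Rightarrow> real \<Rightarrow> real \<Rightarrow> real \<Rightarrow> real \<Rightarrow> real \<Rightarrow> real \<Rightarrow> real" where
  "C5 r mu sig delta gamma beta h2 =
    (let a = m1 r mu sig delta; b = m2 r mu sig delta; g = gstar gamma;
         zb = zbe r mu sig delta beta in
     (1 - g) / ((a - b) * (a - g)) *
       (b * (beta * delta + 1) / delta * zb powr (- a) + (1 - b) / r * zb powr (1 - a)) *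
       h2 powr (1 + gamma * (a - 1)))"

definition C3 :: "real \<Rightarrow> real \<Rightarrow> real \<Rightarrow> real \<Rightarrow> real \<Rightarrow> real \<Rightarrow> real \<Rightarrow> real" where
  "C3 r mu sig delta gamma beta h2 =
    (let k = kap r mu sig; a = m1 r mu sig delta; b = m2 r mu sig delta; g = gstar gamma in
     C5 r mu sig delta gamma beta h2
     + 2 * (g - 1) / (k\<^sup>2 * (a - b) * a * (a - 1) * (a - g)) * h2 powr (1 + gamma * (a - 1)))"

definition C1 :: "real \<Rightarrow> real \<Rightarrow> real \<Rightarrow> real \<Rightarrow> real \<Rightarrow> real \<Rightarrow> real \<Rightarrow> real \<Rightarrow> real" where
  "C1 r mu sig delta gamma beta h1 h2 =
    (let k = kap r mu sig; a = m1 r mu sig delta; b = m2 r mu sig delta; g = gstar gamma in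
     C3 r mu sig delta gamma beta h2
     + 2 * (1 - g) / (k\<^sup>2 * (a - b) * a * (a - 1) * (a - g)) * h1 powr (1 + gamma * (a - 1)))"

definition C2 :: "real \<Rightarrow> real \<Rightarrow> real \<Rightarrow> real \<Rightarrow> real \<Rightarrow> real \<Rightarrow> real \<Rightarrow> real" where
  "C2 r mu sig delta gamma alpha h1 =
    (let a = m1 r mu sig delta; b = m2 r mu sig delta; g = gstar gamma;
         za = zal r mu sig delta alpha in
     (1 - g) / ((a - b) * (b - g)) *
       (a * (alpha * delta - 1) / delta * za powr (- b) + (a - 1) / r * za powr (1 - b)) *
       h1 powr (1 + gamma * (b - 1)))"

definition C4 :: "real \<Rightarrow> real \<Rightarrow> real \<Rightarrow> real \<Rightarrow> real \<Rightarrow> real \<Rightarrow> real \<Rightarrow> real" where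
  "C4 r mu sig delta gamma alpha h1 =
    (let k = kap r mu sig; a = m1 r mu sig delta; b = m2 r mu sig delta; g = gstar gamma in
     C2 r mu sig delta gamma alpha h1
     - 2 * (g - 1) / (k\<^sup>2 * (a - b) * b * (b - 1) * (b - g)) * h1 powr (1 + gamma * (b - 1)))"

definition C6 :: "real \<Rightarrow> real \<Rightarrow> real \<Rightarrow> real \<Rightarrow> real \<Rightarrow> real \<Rightarrow> real \<Rightarrow> real \<Rightarrow> real" where
  "C6 r mu sig delta gamma alpha h1 h2 =
    (let k = kap r mu sig; a = m1 r mu sig delta; b = m2 r mu sig delta; g = gstar gamma in
     C4 r mu sig delta gamma alpha h1
     - 2 * (1 - g) / (k\<^sup>2 * (a - b) * b * (b - 1) * (b - g)) * h2 powr (1 + gamma * (b - 1)))"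

definition x_lavs :: "real \<Rightarrow> real \<Rightarrow> real \<Rightarrow> real \<Rightarrow> real \<Rightarrow> real \<Rightarrow> real \<Rightarrow> real \<Rightarrow> real \<Rightarrow> real" where
  "x_lavs r mu sig delta gamma alpha beta h1 h2 =
    (let a = m1 r mu sig delta; b = m2 r mu sig delta; za = zal r mu sig delta alpha in
     - a * C1 r mu sig delta gamma beta h1 h2 * (za * h1 powr (- gamma)) powr (a - 1)
     - b * C2 r mu sig delta gamma alpha h1 * (za * h1 powr (- gamma)) powr (b - 1)
     + h1 / r)"

definition x_peak :: "real \<Rightarrow> real \<Rightarrow> real \<Rightarrow> real \<Rightarrow> real \<Rightarrow> real \<Rightarrow> real \<Rightarrow> real \<Rightarrow> real \<Rightarrow> real" where
  "x_peak r mu sig delta gamma alpha beta h1 h2 =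
    (let a = m1 r mu sig delta; b = m2 r mu sig delta in
     - a * C1 r mu sig delta gamma beta h1 h2 * (h1 powr (- gamma)) powr (a - 1)
     - b * C2 r mu sig delta gamma alpha h1 * (h1 powr (- gamma)) powr (b - 1)
     + h1 / r)"

definition x_valy :: "real \<Rightarrow> real \<Rightarrow> real \<Rightarrow> real \<Rightarrow> real \<Rightarrow> real \<Rightarrow> real \<Rightarrow> real \<Rightarrow> real \<Rightarrow> real" where
  "x_valy r mu sig delta gamma alpha beta h1 h2 =
    (let a = m1 r mu sig delta; b = m2 r mu sig delta in
     - a * C5 r mu sig delta gamma beta h2 * (h2 powr (- gamma)) powr (a - 1)
     - b * C6 r mu sig delta gamma alpha h1 h2 * (h2 powr (- gamma)) powr (b - 1)
     + h2 / r)"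

definition x_gloom :: "real \<Rightarrow> real \<Rightarrow> real \<Rightarrow> real \<Rightarrow> real \<Rightarrow> real \<Rightarrow> real \<Rightarrow> real \<Rightarrow> real \<Rightarrow> real" where
  "x_gloom r mu sig delta gamma alpha beta h1 h2 =
    (let a = m1 r mu sig delta; b = m2 r mu sig delta; zb = zbe r mu sig delta beta in
     - a * C5 r mu sig delta gamma beta h2 * (zb * h2 powr (- gamma)) powr (a - 1)
     - b * C6 r mu sig delta gamma alpha h1 h2 * (zb * h2 powr (- gamma)) powr (b - 1)
     + h2 / r)"

end

theory Submission
  imports Defs "HOL-Real_Asymp.Real_Asymp"
begin

lemma decr_aux:
  fixes a x y :: real
  assumes a: "a > 1" and xy: "0 < x" "x < y" "y \<le> 1"
  shows "y powr a - a * y < x powr a - a * x"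
proof -
  have "(\<lambda>z. z powr a - a * z) y < (\<lambda>z. z powr a - a * z) x"
  proof (rule DERIV_neg_imp_decreasing_open[OF xy(2)])
    fix z assume z: "x < z" "z < y"
    have zp: "z > 0" using z xy by linarith
    have "z powr (a - 1) < 1 powr (a - 1)"
      using z xy a by (intro powr_less_mono2) auto
    hence "z powr (a - 1) < 1" by simp
    hence "a * z powr (a - 1) - a < 0" using a by (simp add: mult_less_cancel_left)
    moreover have "((\<lambda>z. z powr a - a * z) has_real_derivative a * z powr (a - 1) - a * 1) (at z)"
      using zp by (auto intro!: derivative_eq_intros)
    ultimately show "\<exists>d. ((\<lambda>z. z powr a - a * z) has_real_derivative d) (at z) \<and> d < 0" by auto
  next
    show "continuous_on {x..y} (\<lambda>z. z powr a - a * z)"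
      using xy by (intro continuous_intros) auto
  qed
  thus ?thesis by simp
qed

lemma incr_aux:
  fixes b x y :: real
  assumes b: "b < 0" and xy: "1 \<le> x" "x < y"
  shows "x powr b - b * x < y powr b - b * y"
proof -
  have "(\<lambda>z. z powr b - b * z) x < (\<lambda>z. z powr b - b * z) y"
  proof (rule DERIV_pos_imp_increasing_open[OF xy(2)])
    fix z assume z: "x < z" "z < y"
    have zp: "z > 1" using z xy by linarith
    have "z powr (b - 1) < 1"
      using zp b by (intro powr_less_one) auto
    hence "b * z powr (b - 1) - b > 0" using b
      by (simp add: mult_less_cancel_left_neg)
    moreover have "((\<lambda>z. z powr b - b * z) has_real_derivative b * z powr (b - 1) - b * 1) (at z)"
      using zp by (auto intro!: derivative_eq_intros)
    ultimately show "\<exists>d. ((\<lambda>z. z powr b - b * z) has_real_derivative d) (at z) \<and> d > 0" by auto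
  next
    show "continuous_on {x..y} (\<lambda>z. z powr b - b * z)"
      using xy by (intro continuous_intros) auto
  qed
  thus ?thesis by simp
qed

lemma Z1:
  fixes a b A r d al :: real
  assumes a: "a > 1" and b: "b < 0" and A: "A > 0" and r: "r > 0" and d: "d > 0"
    and i1: "a * A = - (b - 1) / r" and i2: "A + (b - 1) / r - b / d = 0"
    and al: "0 \<le> al" "al < 1 / d"
  shows "\<exists>!z. 0 < z \<and> z \<le> 1 - al * d \<and> A * z powr a + z / r * (b - 1) + b * (al - 1 / d) = 0"
proof -
  define f where "f z = A * z powr a + z / r * (b - 1) + b * (al - 1 / d)" for z
  have fe: "f z = A * (z powr a - a * z) + b * (al - 1 / d)" for z
  proof -
    have e: "b - 1 = - (a * A) * r" using i1 r by (simp add: field_simps)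
    have "z / r * (b - 1) = - (a * A) * z" unfolding e using r by simp
    thus ?thesis unfolding f_def by (simp add: algebra_simps)
  qed
  define z0 where "z0 = 1 - al * d"
  have z0: "0 < z0" "z0 \<le> 1" using al d unfolding z0_def by (auto simp: field_simps)
  have f0: "f 0 > 0" unfolding f_def using al d b by (auto simp: field_simps mult_neg_neg)
  have fz0: "f z0 \<le> 0"
  proof -
    have "z0 powr a = z0 * z0 powr (a - 1)" using z0 by (simp add: powr_mult_base)
    also have "\<dots> \<le> z0 * 1" using z0 a by (intro mult_left_mono powr_le1) auto
    finally have p: "z0 powr a \<le> z0" by simp
    have "b * (al - 1 / d) = - b * z0 / d" unfolding z0_def using d by (simp add: field_simps)
    hence "f z0 = A * z0 powr a + z0 * ((b - 1) / r - b / d)" unfolding f_def by (simp add: algebra_simps)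
    also have "\<dots> \<le> A * z0 + z0 * ((b - 1) / r - b / d)" using p A by simp
    also have "\<dots> = z0 * (A + (b - 1) / r - b / d)" by (simp add: algebra_simps)
    finally show ?thesis using i2 by simp
  qed
  have cp: "continuous_on {0..z0} (\<lambda>z. z powr a)" using a
    by (intro continuous_on_powr') (auto intro: continuous_intros)
  have cont: "continuous_on {0..z0} f" unfolding f_def using r
    by (intro continuous_intros cp) auto
  obtain z where z: "0 \<le> z" "z \<le> z0" "f z = 0" using IVT2'[of f z0 0 0, OF fz0 _ _ cont] f0 z0 by auto
  have zp: "0 < z" using z f0 by (cases "z = 0") auto
  show ?thesis
  proof (rule ex1I[of _ z])
    show "0 < z \<and> z \<le> 1 - al * d \<and> A * z powr a + z / r * (b - 1) + b * (al - 1 / d) = 0"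
      using zp z unfolding z0_def f_def by auto
  next
    fix y assume y: "0 < y \<and> y \<le> 1 - al * d \<and> A * y powr a + y / r * (b - 1) + b * (al - 1 / d) = 0"
    hence fy: "f y = 0" "0 < y" "y \<le> 1" using z0 unfolding f_def z0_def by auto
    have z1: "z \<le> 1" using z z0 by auto
    show "y = z"
    proof (rule ccontr)
      assume "y \<noteq> z"
      hence "y < z \<or> z < y" by auto
      thus False
      proof
        assume "y < z"
        from decr_aux[OF a fy(2) this z1] have "f z < f y" unfolding fe using A
          by (simp add: mult_less_cancel_left)
        thus False using fy z by simp
      next
        assume "z < y"
        from decr_aux[OF a zp this fy(3)] have "f y < f z" unfolding fe using A
          by (simp add: mult_less_cancel_left)
        thus False using fy z by simp
      qed
    qed
  qed
qed

lemma Z2: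
  fixes a b B r d be :: real
  assumes a: "a > 1" and b: "b < 0" and B: "B > 0" and r: "r > 0" and d: "d > 0"
    and i1: "b * B = - (a - 1) / r" and i2: "B + (a - 1) / r - a / d = 0"
    and be: "0 \<le> be"
  shows "\<exists>!z. 1 + be * d \<le> z \<and> B * z powr b + z / r * (a - 1) - a * (be + 1 / d) = 0"
proof -
  define f where "f z = B * z powr b + z / r * (a - 1) - a * (be + 1 / d)" for z
  have fe: "f z = B * (z powr b - b * z) - a * (be + 1 / d)" for z
  proof -
    have e: "a - 1 = - (b * B) * r" using i1 r by (simp add: field_simps)
    have "z / r * (a - 1) = - (b * B) * z" unfolding e using r by simp
    thus ?thesis unfolding f_def by (simp add: algebra_simps)
  qed
  define z0 where "z0 = 1 + be * d"
  have z0: "1 \<le> z0" using be d unfolding z0_def by auto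
  have fz0: "f z0 \<le> 0"
  proof -
    have "z0 powr b = z0 * z0 powr (b - 1)" using z0 by (simp add: powr_mult_base)
    also have "\<dots> \<le> z0 * 1"
    proof -
      have "z0 powr (b - 1) \<le> 1 powr (b - 1)" using z0 b by (intro powr_mono2') auto
      thus ?thesis using z0 by (intro mult_left_mono) auto
    qed
    finally have p: "z0 powr b \<le> z0" by simp
    have "a * (be + 1 / d) = a * z0 / d" unfolding z0_def using d by (simp add: field_simps)
    hence "f z0 = B * z0 powr b + z0 * ((a - 1) / r - a / d)" unfolding f_def by (simp add: algebra_simps)
    also have "\<dots> \<le> B * z0 + z0 * ((a - 1) / r - a / d)" using p B by simp
    also have "\<dots> = z0 * (B + (a - 1) / r - a / d)" by (simp add: algebra_simps)
    finally show ?thesis using i2 by simp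
  qed
  define Z where "Z = z0 + r * (a * (be + 1 / d)) / (a - 1) + 1"
  have Zge: "z0 \<le> Z" unfolding Z_def using a r be d by (auto intro!: divide_nonneg_pos)
  have fZ: "f Z \<ge> 0"
  proof -
    have "Z / r * (a - 1) \<ge> a * (be + 1 / d)"
    proof -
      have "Z \<ge> r * (a * (be + 1 / d)) / (a - 1)" unfolding Z_def using z0 by auto
      hence "Z / r * (a - 1) \<ge> r * (a * (be + 1 / d)) / (a - 1) / r * (a - 1)"
        using r a by (intro mult_right_mono divide_right_mono) auto
      moreover have "\<And>W. r * W / (a - 1) / r * (a - 1) = W"
        using r a by simp
      ultimately show ?thesis by simp
    qed
    moreover have "B * Z powr b \<ge> 0" using B by simp
    ultimately show ?thesis unfolding f_def by linarith
  qed
  have cont: "continuous_on {z0..Z} f" unfolding f_def using z0 r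
    by (intro continuous_intros) auto
  obtain z where z: "z0 \<le> z" "z \<le> Z" "f z = 0" using IVT'[of f z0 0 Z, OF fz0 fZ Zge cont] by auto
  show ?thesis
  proof (rule ex1I[of _ z])
    show "1 + be * d \<le> z \<and> B * z powr b + z / r * (a - 1) - a * (be + 1 / d) = 0"
      using z unfolding z0_def f_def by auto
  next
    fix y assume y: "1 + be * d \<le> y \<and> B * y powr b + y / r * (a - 1) - a * (be + 1 / d) = 0"
    hence fy: "f y = 0" "1 \<le> y" using z0 unfolding f_def z0_def by auto
    have z1: "1 \<le> z" using z z0 by auto
    show "y = z"
    proof (rule ccontr)
      assume "y \<noteq> z"
      hence "y < z \<or> z < y" by auto
      thus False
      proof
        assume "y < z"
        from incr_aux[OF b fy(2) this] have "f y < f z" unfolding fe using B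
          by (simp add: mult_less_cancel_left)
        thus False using fy z by simp
      next
        assume "z < y"
        from incr_aux[OF b z1 this] have "f z < f y" unfolding fe using B
          by (simp add: mult_less_cancel_left)
        thus False using fy z by simp
      qed
    qed
  qed
qed

lemma vieta:
  fixes c e d x y :: real
  assumes c: "c \<noteq> 0" and x: "c * x\<^sup>2 + e * x - d = 0" and y: "c * y\<^sup>2 + e * y - d = 0" and xy: "x \<noteq> y"
  shows "c * (x + y) + e = 0" "c * x * y = - d"
proof -
  have "(x - y) * (c * (x + y) + e) = 0" using x y by (simp add: algebra_simps power2_eq_square)
  thus s: "c * (x + y) + e = 0" using xy by simp
  hence "e = - c * (x + y)" by simp
  with x show "c * x * y = - d" by (simp add: algebra_simps power2_eq_square)
qed

lemma quad_roots:
  fixes c e d :: real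
  assumes c: "c > 0" and d: "d > 0" and q1: "c + e - d < 0"
  shows "\<exists>!m. m > 1 \<and> c * m\<^sup>2 + e * m - d = 0" "\<exists>!m. m < 0 \<and> c * m\<^sup>2 + e * m - d = 0"
proof -
  define q where "q m = c * m\<^sup>2 + e * m - d" for m
  have cont: "continuous_on S q" for S unfolding q_def by (intro continuous_intros)
  define B where "B = 2 + (\<bar>e\<bar> + d) / c"
  have B1: "B \<ge> 1" unfolding B_def using c d by (auto intro!: add_nonneg_nonneg divide_nonneg_pos)
  have cB: "c * B = 2 * c + \<bar>e\<bar> + d" unfolding B_def using c by (simp add: field_simps)
  have qB: "q B \<ge> 0"
  proof -
    have "c * B + e \<ge> 2 * c + d" using cB by linarith
    hence "B * (c * B + e) \<ge> 1 * (2 * c + d)" using B1 c d by (intro mult_mono) auto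
    thus ?thesis unfolding q_def using c by (simp add: algebra_simps power2_eq_square)
  qed
  have qmB: "q (- B) \<ge> 0"
  proof -
    have "c * B - e \<ge> 2 * c + d" using cB by linarith
    hence "B * (c * B - e) \<ge> 1 * (2 * c + d)" using B1 c d by (intro mult_mono) auto
    thus ?thesis unfolding q_def using c by (simp add: algebra_simps power2_eq_square)
  qed
  have uniq: "x * y < 0" if "q x = 0" "q y = 0" "x \<noteq> y" for x y
  proof -
    have "c * x * y = - d" using vieta(2)[of c x e d y] that c unfolding q_def by auto
    hence "c * (x * y) < 0" using d by (simp add: mult.assoc)
    thus ?thesis using c by (simp add: mult_less_0_iff)
  qed
  show "\<exists>!m. m > 1 \<and> c * m\<^sup>2 + e * m - d = 0"
  proof -
    obtain m where m: "1 \<le> m" "m \<le> B" "q m = 0" using IVT'[of q 1 0 B, OF _ qB B1 cont] q1 unfolding q_def by auto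
    have "m \<noteq> 1" using m q1 unfolding q_def by auto
    hence "m > 1" using m by auto
    moreover have "y = m" if "y > 1" "q y = 0" for y
      using uniq[of y m] that m \<open>m > 1\<close> by (cases "y = m") (auto simp: mult_less_0_iff)
    ultimately show ?thesis using m unfolding q_def by blast
  qed
  show "\<exists>!m. m < 0 \<and> c * m\<^sup>2 + e * m - d = 0"
  proof -
    obtain m where m: "- B \<le> m" "m \<le> 0" "q m = 0" using IVT2'[of q 0 0 "- B", OF _ qmB _ cont] d B1 unfolding q_def by auto
    have "m \<noteq> 0" using m d unfolding q_def by auto
    hence "m < 0" using m by auto
    moreover have "y = m" if "y < 0" "q y = 0" for y
      using uniq[of y m] that m \<open>m < 0\<close> by (cases "y = m") (auto simp: mult_less_0_iff)
    ultimately show ?thesis using m unfolding q_def by blast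
  qed
qed

lemma roots:
  fixes r mu sig d :: real
  assumes r: "r > 0" and sig: "sig > 0" and d: "d > 0" and kn: "mu \<noteq> r"
  shows "m1 r mu sig d > 1" "charpoly r mu sig d (m1 r mu sig d) = 0"
        "m2 r mu sig d < 0" "charpoly r mu sig d (m2 r mu sig d) = 0"
proof -
  define k where "k = kap r mu sig"
  have k: "k\<^sup>2 > 0" unfolding k_def kap_def using sig kn by auto
  have cp: "charpoly r mu sig d m = k\<^sup>2 / 2 * m\<^sup>2 + (d - r - k\<^sup>2 / 2) * m - d" for m
    unfolding charpoly_def k_def by simp
  have q1: "k\<^sup>2 / 2 + (d - r - k\<^sup>2 / 2) - d < 0" using r by simp
  note qr = quad_roots[of "k\<^sup>2 / 2" d "d - r - k\<^sup>2 / 2", OF _ d q1] k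
  have e1: "\<exists>!m. m > 1 \<and> charpoly r mu sig d m = 0" unfolding cp using qr by auto
  have e2: "\<exists>!m. m < 0 \<and> charpoly r mu sig d m = 0" unfolding cp using qr by auto
  show "m1 r mu sig d > 1" "charpoly r mu sig d (m1 r mu sig d) = 0"
    using theI'[OF e1] unfolding m1_def by auto
  show "m2 r mu sig d < 0" "charpoly r mu sig d (m2 r mu sig d) = 0"
    using theI'[OF e2] unfolding m2_def by auto
qed

lemma divI: "x * r = y \<Longrightarrow> r \<noteq> 0 \<Longrightarrow> y / r = (x::real)" by auto

lemma ident:
  fixes a b kk r d :: real
  assumes kk: "kk > 0" and r: "r > 0" and d: "d > 0" and a: "a > 1" and b: "b < 0"
    and h1: "kk / 2 * (a + b) + (d - r - kk / 2) = 0" and h2: "kk / 2 * a * b = - d"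
  shows "a * (2 / (kk * a * (a - 1))) = - (b - 1) / r"
    "2 / (kk * a * (a - 1)) + (b - 1) / r - b / d = 0"
    "b * (2 / (kk * b * (b - 1))) = - (a - 1) / r"
    "2 / (kk * b * (b - 1)) + (a - 1) / r - a / d = 0"
proof -
  have e: "kk/2*(a-1)*(b-1) = kk/2*a*b - (kk/2*(a+b)) + kk/2" by (simp add: field_simps)
  have rr: "r = - (kk / 2 * (a - 1) * (b - 1))" using h1 h2 e by linarith
  have dd: "d = - (kk / 2 * a * b)" using h2 by simp
  have nz: "a \<noteq> 0" "a - 1 \<noteq> 0" "b \<noteq> 0" "b - 1 \<noteq> 0" "kk \<noteq> 0" using a b kk by auto
  have gg: "\<And>A x::real. A + - (x * A) - - ((x - 1) * A) = 0" by (simp add: algebra_simps)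
  have rn: "r \<noteq> 0" "d \<noteq> 0" using r d by auto
  have t1: "2 / (kk * (a - 1)) * r = - (b - 1)" unfolding rr using nz by (simp add: field_simps)
  have t2: "2 / (kk * (b - 1)) * r = - (a - 1)" unfolding rr using nz by (simp add: field_simps)
  have t3: "(- 2 / (kk * a)) * d = b" unfolding dd using nz by (simp add: field_simps)
  have t4: "(- 2 / (kk * b)) * d = a" unfolding dd using nz by (simp add: field_simps)
  have I1: "a * (2 / (kk * a * (a - 1))) = - (b - 1) / r"
  proof -
    have e1: "- (b - 1) / r = 2 / (kk * (a - 1))" using divI[OF t1 rn(1)] by simp
    have e2: "a * (2 / (kk * a * (a - 1))) = 2 / (kk * (a - 1))" using nz by (simp add: field_simps)
    show ?thesis unfolding e1 e2 ..
  qed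
  have I3: "b * (2 / (kk * b * (b - 1))) = - (a - 1) / r"
  proof -
    have e1: "- (a - 1) / r = 2 / (kk * (b - 1))" using divI[OF t2 rn(1)] by simp
    have e2: "b * (2 / (kk * b * (b - 1))) = 2 / (kk * (b - 1))" using nz by (simp add: field_simps)
    show ?thesis unfolding e1 e2 ..
  qed
  have s1: "(b - 1) / r = - (2 / (kk * (a - 1)))"
    by (rule divI) (simp_all only: mult_minus_left t1 rn, simp)
  have s2: "(a - 1) / r = - (2 / (kk * (b - 1)))"
    by (rule divI) (simp_all only: mult_minus_left t2 rn, simp)
  have s3: "b / d = - 2 / (kk * a)" using divI[OF t3 rn(2)] by simp
  have s4: "a / d = - 2 / (kk * b)" using divI[OF t4 rn(2)] by simp
  show "a * (2 / (kk * a * (a - 1))) = - (b - 1) / r" by (rule I1)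
  show "b * (2 / (kk * b * (b - 1))) = - (a - 1) / r" by (rule I3)
  show "2 / (kk * a * (a - 1)) + (b - 1) / r - b / d = 0"
  proof -
    have f1: "2 / (kk * (a - 1)) = a * (2 / (kk * a * (a - 1)))" using nz by (simp add: field_simps)
    have f2: "- 2 / (kk * a) = - ((a - 1) * (2 / (kk * a * (a - 1))))" using nz by (simp add: field_simps)
    show ?thesis unfolding s1 s3 f1 f2 by (rule gg)
  qed
  show "2 / (kk * b * (b - 1)) + (a - 1) / r - a / d = 0"
  proof -
    have f1: "2 / (kk * (b - 1)) = b * (2 / (kk * b * (b - 1)))" using nz by (simp add: field_simps)
    have f2: "- 2 / (kk * b) = - ((b - 1) * (2 / (kk * b * (b - 1))))" using nz by (simp add: field_simps)
    show ?thesis unfolding s2 s4 f1 f2 by (rule gg)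
  qed
qed

lemma basics:
  fixes r mu sig d :: real
  assumes r: "r > 0" and sig: "sig > 0" and d: "d > 0" and kn: "mu \<noteq> r"
  defines "a \<equiv> m1 r mu sig d" and "b \<equiv> m2 r mu sig d" and "k \<equiv> kap r mu sig"
  shows "a > 1" "b < 0" "k\<^sup>2 > 0"
    "a * (2 / (k\<^sup>2 * a * (a - 1))) = - (b - 1) / r"
    "2 / (k\<^sup>2 * a * (a - 1)) + (b - 1) / r - b / d = 0"
    "b * (2 / (k\<^sup>2 * b * (b - 1))) = - (a - 1) / r"
    "2 / (k\<^sup>2 * b * (b - 1)) + (a - 1) / r - a / d = 0"
    "2 / (k\<^sup>2 * a * (a - 1)) > 0" "2 / (k\<^sup>2 * b * (b - 1)) > 0"
proof -
  note R = roots[OF r sig d kn, folded a_def b_def]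
  show a: "a > 1" and b: "b < 0" using R by auto
  show k: "k\<^sup>2 > 0" unfolding k_def kap_def using sig kn by auto
  have cp: "charpoly r mu sig d m = k\<^sup>2 / 2 * m\<^sup>2 + (d - r - k\<^sup>2 / 2) * m - d" for m
    unfolding charpoly_def k_def by simp
  have ab: "a \<noteq> b" using a b by auto
  note V = vieta[of "k\<^sup>2 / 2" a "d - r - k\<^sup>2 / 2" d b, OF _ _ _ ab]
  have h1: "k\<^sup>2 / 2 * (a + b) + (d - r - k\<^sup>2 / 2) = 0" and h2: "k\<^sup>2 / 2 * a * b = - d"
    using V R k unfolding cp by auto
  note I = ident[OF k r d a b h1 h2]
  show "a * (2 / (k\<^sup>2 * a * (a - 1))) = - (b - 1) / r"
    "2 / (k\<^sup>2 * a * (a - 1)) + (b - 1) / r - b / d = 0"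
    "b * (2 / (k\<^sup>2 * b * (b - 1))) = - (a - 1) / r"
    "2 / (k\<^sup>2 * b * (b - 1)) + (a - 1) / r - a / d = 0" using I by auto
  show "2 / (k\<^sup>2 * a * (a - 1)) > 0" using a k by (auto intro!: divide_pos_pos mult_pos_pos)
  have "b * (b - 1) > 0" using b by (simp add: mult_neg_neg)
  thus "2 / (k\<^sup>2 * b * (b - 1)) > 0" using k by (auto intro!: divide_pos_pos simp: mult.assoc)
qed

lemma zal_ex1:
  fixes r mu sig d al :: real
  assumes r: "r > 0" and sig: "sig > 0" and d: "d > 0" and kn: "mu \<noteq> r"
    and al: "0 \<le> al" "al < 1 / d"
  shows "\<exists>!z. 0 < z \<and> z \<le> 1 - al * d \<and>
       2 / ((kap r mu sig)\<^sup>2 * m1 r mu sig d * (m1 r mu sig d - 1)) * z powr m1 r mu sig d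
       + z / r * (m2 r mu sig d - 1) + m2 r mu sig d * (al - 1 / d) = 0"
  using basics[OF r sig d kn] by (intro Z1 r d al) auto

lemma zbe_ex1:
  fixes r mu sig d be :: real
  assumes r: "r > 0" and sig: "sig > 0" and d: "d > 0" and kn: "mu \<noteq> r"
    and be: "0 \<le> be"
  shows "\<exists>!z. 1 + be * d \<le> z \<and>
       2 / ((kap r mu sig)\<^sup>2 * m2 r mu sig d * (m2 r mu sig d - 1)) * z powr m2 r mu sig d
       + z / r * (m1 r mu sig d - 1) - m1 r mu sig d * (be + 1 / d) = 0"
  using basics[OF r sig d kn] by (intro Z2 r d be) auto

lemma zal_bounds:
  fixes r mu sig d al :: real
  assumes r: "r > 0" and sig: "sig > 0" and d: "d > 0" and kn: "mu \<noteq> r"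
    and al: "0 \<le> al" "al < 1 / d"
  shows "0 < zal r mu sig d al \<and> zal r mu sig d al \<le> 1 - al * d"
  using theI'[OF zal_ex1[OF assms]] unfolding zal_def Let_def by blast

lemma zbe_bounds:
  fixes r mu sig d be :: real
  assumes r: "r > 0" and sig: "sig > 0" and d: "d > 0" and kn: "mu \<noteq> r"
    and be: "0 \<le> be"
  shows "1 + be * d \<le> zbe r mu sig d be"
  using theI'[OF zbe_ex1[OF assms]] unfolding zbe_def Let_def by blast

lemma zal0:
  fixes r mu sig d :: real
  assumes r: "r > 0" and sig: "sig > 0" and d: "d > 0" and kn: "mu \<noteq> r"
  shows "zal r mu sig d 0 = 1"
proof -
  note S = basics[OF r sig d kn]
  have "0 \<le> (0::real)" "0 < 1 / d" using d by auto
  note E = zal_ex1[OF r sig d kn this]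
  show ?thesis unfolding zal_def Let_def
    by (rule the1_equality[OF E]) (use S in simp)
qed

lemma zbe0:
  fixes r mu sig d :: real
  assumes r: "r > 0" and sig: "sig > 0" and d: "d > 0" and kn: "mu \<noteq> r"
  shows "zbe r mu sig d 0 = 1"
proof -
  note S = basics[OF r sig d kn]
  have "0 \<le> (0::real)" by auto
  note E = zbe_ex1[OF r sig d kn this]
  show ?thesis unfolding zbe_def Let_def
    by (rule the1_equality[OF E]) (use S in simp)
qed

lemma part1:
  fixes r mu sig d :: real
  assumes r: "r > 0" and sig: "sig > 0" and d: "d > 0" and kn: "mu \<noteq> r"
  shows "((\<lambda>a. zal r mu sig d a) \<longlongrightarrow> 0) (at_left (1 / d))"
    "filterlim (\<lambda>b. zbe r mu sig d b) at_top at_top"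
proof -
  have ev: "eventually (\<lambda>x. x \<in> {0<..<1/d}) (at_left (1 / d))"
    using d by (intro eventually_at_left_real) auto
  show "((\<lambda>a. zal r mu sig d a) \<longlongrightarrow> 0) (at_left (1 / d))"
  proof (rule tendsto_sandwich[of "\<lambda>_. 0" _ _ "\<lambda>a. 1 - a * d"])
    show "eventually (\<lambda>a. 0 \<le> zal r mu sig d a) (at_left (1 / d))"
      using ev by eventually_elim (auto dest!: zal_bounds[OF r sig d kn, rotated] intro: less_imp_le)
    show "eventually (\<lambda>a. zal r mu sig d a \<le> 1 - a * d) (at_left (1 / d))"
      using ev by eventually_elim (auto dest!: zal_bounds[OF r sig d kn, rotated] intro: less_imp_le)
    show "((\<lambda>_. 0) \<longlongrightarrow> (0::real)) (at_left (1 / d))" by simp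
    have "((\<lambda>a. 1 - a * d) \<longlongrightarrow> 1 - 1 / d * d) (at_left (1 / d))"
      by (intro tendsto_intros)
    thus "((\<lambda>a. 1 - a * d) \<longlongrightarrow> 0) (at_left (1 / d))" using d by simp
  qed
  have l: "filterlim (\<lambda>b. 1 + b * d) at_top at_top"
    by (intro filterlim_tendsto_add_at_top[OF tendsto_const] filterlim_at_top_mult_tendsto_pos[OF tendsto_const d] filterlim_ident)
  show "filterlim (\<lambda>b. zbe r mu sig d b) at_top at_top"
    by (rule filterlim_at_top_mono[OF l])
       (use eventually_ge_at_top[of 0] in eventually_elim, use zbe_bounds[OF r sig d kn] in auto)
qed

lemma gstar_lim: "(gstar \<longlongrightarrow> 1) at_top"
proof -
  have "((\<lambda>g::real. - (1 - g) / g) \<longlongrightarrow> 1) at_top" by real_asymp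
  thus ?thesis unfolding gstar_def[abs_def] .
qed

lemma zero_bdd:
  fixes f g :: "'a \<Rightarrow> real"
  assumes f: "(f \<longlongrightarrow> 0) F" and g: "eventually (\<lambda>x. \<bar>g x\<bar> \<le> M) F"
  shows "((\<lambda>x. f x * g x) \<longlongrightarrow> 0) F"
proof (rule Lim_null_comparison)
  show "eventually (\<lambda>x. norm (f x * g x) \<le> \<bar>f x\<bar> * M) F"
    using g by eventually_elim (auto simp: abs_mult intro: mult_left_mono)
  have "((\<lambda>x. \<bar>f x\<bar> * M) \<longlongrightarrow> \<bar>0\<bar> * M) F" by (intro tendsto_intros f)
  thus "((\<lambda>x. \<bar>f x\<bar> * M) \<longlongrightarrow> 0) F" by simp
qed

lemma Lform:
  fixes h u z e t :: real
  assumes h: "h > 0" and u: "u > 0"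
  shows "h powr (1 + t * e) * (z * u powr (- t)) powr e = z powr e * h * (h / u) powr (t * e)"
proof -
  have "(z * u powr (- t)) powr e = z powr e * u powr (- (t * e))"
    by (simp add: powr_mult powr_powr)
  moreover have "h powr (1 + t * e) = h * h powr (t * e)" using h by (simp add: powr_add)
  moreover have "(h / u) powr (t * e) = h powr (t * e) * u powr (- (t * e))"
    unfolding powr_divide powr_minus by (simp add: divide_inverse)
  ultimately show ?thesis by (simp add: algebra_simps)
qed

lemma Lbound:
  fixes h u z e t :: real
  assumes h: "h > 0" and u: "u > 0" and c: "(h \<le> u \<and> 0 \<le> t * e) \<or> (u \<le> h \<and> t * e \<le> 0)"
  shows "\<bar>h powr (1 + t * e) * (z * u powr (- t)) powr e\<bar> \<le> z powr e * h"
proof -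
  have p: "(h / u) powr (t * e) \<le> 1"
    using c
  proof
    assume "h \<le> u \<and> 0 \<le> t * e"
    thus ?thesis using h u by (intro powr_le1) auto
  next
    assume a: "u \<le> h \<and> t * e \<le> 0"
    hence "(h / u) powr (t * e) \<le> 1 powr (t * e)" using h u by (intro powr_mono2') auto
    thus ?thesis by simp
  qed
  have "\<bar>z powr e * h * (h / u) powr (t * e)\<bar> = z powr e * h * (h / u) powr (t * e)"
    using h by simp
  also have "\<dots> \<le> z powr e * h * 1" using p h by (intro mult_left_mono) auto
  finally show ?thesis unfolding Lform[OF h u] by simp
qed

lemma ring1:
  fixes a b Q5 c3 c1 Q2 H2 H1 H1' X1 X2 hr :: real
  shows "- a * (Q5 * H2 + c3 * H2 + c1 * H1) * X1 - b * (Q2 * H1') * X2 + hr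
    = hr + (- a * Q5) * (H2 * X1) + (- a * c3) * (H2 * X1) + (- a * c1) * (H1 * X1) + (- b * Q2) * (H1' * X2)"
  by (simp add: algebra_simps)

lemma lavs_lim:
  fixes r mu sig d al be h1 h2 :: real
  assumes r: "r > 0" and sig: "sig > 0" and d: "d > 0" and kn: "mu \<noteq> r"
    and h: "h2 > 0" "h1 \<ge> h2"
  shows "((\<lambda>gm. x_lavs r mu sig d gm al be h1 h2) \<longlongrightarrow> h1 / r) at_top"
proof -
  define a where "a = m1 r mu sig d"
  define b where "b = m2 r mu sig d"
  define k where "k = kap r mu sig"
  define za where "za = zal r mu sig d al"
  define zb where "zb = zbe r mu sig d be"
  define K5 where "K5 = b * (be * d + 1) / d * zb powr (- a) + (1 - b) / r * zb powr (1 - a)"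
  define K2 where "K2 = a * (al * d - 1) / d * za powr (- b) + (a - 1) / r * za powr (1 - b)"
  define E1 where "E1 g = - a * ((1 - g) / ((a - b) * (a - g)) * K5)" for g
  define E2 where "E2 g = - a * (2 * (g - 1) / (k\<^sup>2 * (a - b) * a * (a - 1) * (a - g)))" for g
  define E3 where "E3 g = - a * (2 * (1 - g) / (k\<^sup>2 * (a - b) * a * (a - 1) * (a - g)))" for g
  define E4 where "E4 g = - b * ((1 - g) / ((a - b) * (b - g)) * K2)" for g
  define W1 where "W1 gm = h2 powr (1 + gm * (a - 1)) * (za * h1 powr (- gm)) powr (a - 1)" for gm
  define W3 where "W3 gm = h1 powr (1 + gm * (a - 1)) * (za * h1 powr (- gm)) powr (a - 1)" for gm
  define W4 where "W4 gm = h1 powr (1 + gm * (b - 1)) * (za * h1 powr (- gm)) powr (b - 1)" for gm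
  note S = basics[OF r sig d kn, folded a_def b_def k_def]
  have h1: "h1 > 0" using h by linarith
  have dec: "x_lavs r mu sig d gm al be h1 h2 = h1 / r + E1 (gstar gm) * W1 gm + E2 (gstar gm) * W1 gm
      + E3 (gstar gm) * W3 gm + E4 (gstar gm) * W4 gm" for gm
    unfolding x_lavs_def C1_def C3_def C5_def C2_def Let_def
      a_def[symmetric] b_def[symmetric] k_def[symmetric] za_def[symmetric] zb_def[symmetric]
      E1_def E2_def E3_def E4_def W1_def W3_def W4_def K5_def K2_def
    by (rule ring1)
  have nz: "a - b \<noteq> 0" "a - 1 \<noteq> 0" "b - 1 \<noteq> 0" "a \<noteq> 0" "k\<^sup>2 \<noteq> 0" using S by auto
  have L1: "((\<lambda>gm. E1 (gstar gm)) \<longlongrightarrow> 0) at_top"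
  proof -
    have "((\<lambda>gm. E1 (gstar gm)) \<longlongrightarrow> E1 1) at_top" unfolding E1_def
      by (intro tendsto_intros gstar_lim) (use nz in simp)
    thus ?thesis unfolding E1_def by simp
  qed
  have L2: "((\<lambda>gm. E2 (gstar gm)) \<longlongrightarrow> 0) at_top"
  proof -
    have "((\<lambda>gm. E2 (gstar gm)) \<longlongrightarrow> E2 1) at_top" unfolding E2_def
      by (intro tendsto_intros gstar_lim) (use nz in simp)
    thus ?thesis unfolding E2_def by simp
  qed
  have L3: "((\<lambda>gm. E3 (gstar gm)) \<longlongrightarrow> 0) at_top"
  proof -
    have "((\<lambda>gm. E3 (gstar gm)) \<longlongrightarrow> E3 1) at_top" unfolding E3_def
      by (intro tendsto_intros gstar_lim) (use nz in simp)
    thus ?thesis unfolding E3_def by simp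
  qed
  have L4: "((\<lambda>gm. E4 (gstar gm)) \<longlongrightarrow> 0) at_top"
  proof -
    have "((\<lambda>gm. E4 (gstar gm)) \<longlongrightarrow> E4 1) at_top" unfolding E4_def
      by (intro tendsto_intros gstar_lim) (use nz in simp)
    thus ?thesis unfolding E4_def by simp
  qed
  have B1: "eventually (\<lambda>gm. \<bar>W1 gm\<bar> \<le> za powr (a - 1) * h2) at_top"
    using eventually_ge_at_top[of 0] by eventually_elim
      (unfold W1_def, rule Lbound, use h h1 S in auto)
  have B3: "eventually (\<lambda>gm. \<bar>W3 gm\<bar> \<le> za powr (a - 1) * h1) at_top"
    using eventually_ge_at_top[of 0] by eventually_elim
      (unfold W3_def, rule Lbound, use h h1 S in auto)
  have B4: "eventually (\<lambda>gm. \<bar>W4 gm\<bar> \<le> za powr (b - 1) * h1) at_top"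
    using eventually_ge_at_top[of 0] by eventually_elim
      (unfold W4_def, rule Lbound, use h h1 S in \<open>auto intro!: mult_nonneg_nonpos\<close>)
  have "((\<lambda>gm. h1 / r + E1 (gstar gm) * W1 gm + E2 (gstar gm) * W1 gm
      + E3 (gstar gm) * W3 gm + E4 (gstar gm) * W4 gm) \<longlongrightarrow> h1 / r + 0 + 0 + 0 + 0) at_top"
    by (intro tendsto_add tendsto_const zero_bdd[OF L1 B1] zero_bdd[OF L2 B1] zero_bdd[OF L3 B3] zero_bdd[OF L4 B4])
  thus ?thesis unfolding dec by simp
qed

lemma ring2:
  fixes a b Q5 c4 c6 Q2 H2 H1' G2 Y1 Y2 hr :: real
  shows "- a * (Q5 * H2) * Y1 - b * (Q2 * H1' - c4 * H1' - c6 * G2) * Y2 + hr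
    = hr + (- a * Q5) * (H2 * Y1) + (- b * Q2) * (H1' * Y2) + (b * c4) * (H1' * Y2) + (b * c6) * (G2 * Y2)"
  by (simp add: algebra_simps)

lemma gloom_lim:
  fixes r mu sig d al be h1 h2 :: real
  assumes r: "r > 0" and sig: "sig > 0" and d: "d > 0" and kn: "mu \<noteq> r"
    and h: "h2 > 0" "h1 \<ge> h2"
  shows "((\<lambda>gm. x_gloom r mu sig d gm al be h1 h2) \<longlongrightarrow> h2 / r) at_top"
proof -
  define a where "a = m1 r mu sig d"
  define b where "b = m2 r mu sig d"
  define k where "k = kap r mu sig"
  define za where "za = zal r mu sig d al"
  define zb where "zb = zbe r mu sig d be"
  define K5 where "K5 = b * (be * d + 1) / d * zb powr (- a) + (1 - b) / r * zb powr (1 - a)"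
  define K2 where "K2 = a * (al * d - 1) / d * za powr (- b) + (a - 1) / r * za powr (1 - b)"
  define E1 where "E1 g = - a * ((1 - g) / ((a - b) * (a - g)) * K5)" for g
  define E2 where "E2 g = - b * ((1 - g) / ((a - b) * (b - g)) * K2)" for g
  define E3 where "E3 g = b * (2 * (g - 1) / (k\<^sup>2 * (a - b) * b * (b - 1) * (b - g)))" for g
  define E4 where "E4 g = b * (2 * (1 - g) / (k\<^sup>2 * (a - b) * b * (b - 1) * (b - g)))" for g
  define W1 where "W1 gm = h2 powr (1 + gm * (a - 1)) * (zb * h2 powr (- gm)) powr (a - 1)" for gm
  define W2 where "W2 gm = h1 powr (1 + gm * (b - 1)) * (zb * h2 powr (- gm)) powr (b - 1)" for gm
  define W4 where "W4 gm = h2 powr (1 + gm * (b - 1)) * (zb * h2 powr (- gm)) powr (b - 1)" for gm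
  note S = basics[OF r sig d kn, folded a_def b_def k_def]
  have h1: "h1 > 0" using h by linarith
  have dec: "x_gloom r mu sig d gm al be h1 h2 = h2 / r + E1 (gstar gm) * W1 gm + E2 (gstar gm) * W2 gm
      + E3 (gstar gm) * W2 gm + E4 (gstar gm) * W4 gm" for gm
    unfolding x_gloom_def C6_def C4_def C5_def C2_def Let_def
      a_def[symmetric] b_def[symmetric] k_def[symmetric] za_def[symmetric] zb_def[symmetric]
      E1_def E2_def E3_def E4_def W1_def W2_def W4_def K5_def K2_def
    by (rule ring2)
  have nz: "a - b \<noteq> 0" "a - 1 \<noteq> 0" "b - 1 \<noteq> 0" "b \<noteq> 0" "k\<^sup>2 \<noteq> 0" using S by auto
  have L1: "((\<lambda>gm. E1 (gstar gm)) \<longlongrightarrow> 0) at_top"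
  proof -
    have "((\<lambda>gm. E1 (gstar gm)) \<longlongrightarrow> E1 1) at_top" unfolding E1_def
      by (intro tendsto_intros gstar_lim) (use nz in simp)
    thus ?thesis unfolding E1_def by simp
  qed
  have L2: "((\<lambda>gm. E2 (gstar gm)) \<longlongrightarrow> 0) at_top"
  proof -
    have "((\<lambda>gm. E2 (gstar gm)) \<longlongrightarrow> E2 1) at_top" unfolding E2_def
      by (intro tendsto_intros gstar_lim) (use nz in simp)
    thus ?thesis unfolding E2_def by simp
  qed
  have L3: "((\<lambda>gm. E3 (gstar gm)) \<longlongrightarrow> 0) at_top"
  proof -
    have "((\<lambda>gm. E3 (gstar gm)) \<longlongrightarrow> E3 1) at_top" unfolding E3_def
      by (intro tendsto_intros gstar_lim) (use nz in simp)
    thus ?thesis unfolding E3_def by simp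
  qed
  have L4: "((\<lambda>gm. E4 (gstar gm)) \<longlongrightarrow> 0) at_top"
  proof -
    have "((\<lambda>gm. E4 (gstar gm)) \<longlongrightarrow> E4 1) at_top" unfolding E4_def
      by (intro tendsto_intros gstar_lim) (use nz in simp)
    thus ?thesis unfolding E4_def by simp
  qed
  have B1: "eventually (\<lambda>gm. \<bar>W1 gm\<bar> \<le> zb powr (a - 1) * h2) at_top"
    using eventually_ge_at_top[of 0] by eventually_elim
      (unfold W1_def, rule Lbound, use h h1 S in auto)
  have B2: "eventually (\<lambda>gm. \<bar>W2 gm\<bar> \<le> zb powr (b - 1) * h1) at_top"
    using eventually_ge_at_top[of 0] by eventually_elim
      (unfold W2_def, rule Lbound, use h h1 S in \<open>auto intro!: mult_nonneg_nonpos\<close>)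
  have B4: "eventually (\<lambda>gm. \<bar>W4 gm\<bar> \<le> zb powr (b - 1) * h2) at_top"
    using eventually_ge_at_top[of 0] by eventually_elim
      (unfold W4_def, rule Lbound, use h h1 S in \<open>auto intro!: mult_nonneg_nonpos\<close>)
  have "((\<lambda>gm. h2 / r + E1 (gstar gm) * W1 gm + E2 (gstar gm) * W2 gm
      + E3 (gstar gm) * W2 gm + E4 (gstar gm) * W4 gm) \<longlongrightarrow> h2 / r + 0 + 0 + 0 + 0) at_top"
    by (intro tendsto_add tendsto_const zero_bdd[OF L1 B1] zero_bdd[OF L2 B2] zero_bdd[OF L3 B2] zero_bdd[OF L4 B4])
  thus ?thesis unfolding dec by simp
qed

theorem theorem4p2:
  fixes r mu sig delta alpha beta h1 h2 :: real
  assumes r: "r > 0" and mu: "mu > 0" and sig: "sig > 0" and delta: "delta > 0"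
    and kap_nz: "mu \<noteq> r"
    and alpha: "0 \<le> alpha" "alpha \<le> 1 / delta"
    and beta: "beta \<ge> 0"
    and h: "h2 > 0" "h1 \<ge> h2"
  shows
    "(zal r mu sig delta 0 = 1 \<and> zbe r mu sig delta 0 = 1 \<and>
      (\<forall>gamma. gamma > 0 \<and> gamma \<noteq> 1 \<and> K0 r mu sig delta gamma > 0 \<longrightarrow>
         x_lavs r mu sig delta gamma 0 0 h1 h2 = x_peak r mu sig delta gamma 0 0 h1 h2 \<and>
         x_gloom r mu sig delta gamma 0 0 h1 h2 = x_valy r mu sig delta gamma 0 0 h1 h2))
   \<and> ((\<lambda>a. zal r mu sig delta a) \<longlongrightarrow> 0) (at_left (1 / delta))
   \<and> filterlim (\<lambda>b. zbe r mu sig delta b) at_top at_top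
   \<and> ((\<lambda>gamma. x_lavs r mu sig delta gamma alpha beta h1 h2 / h1) \<longlongrightarrow> 1 / r) at_top
   \<and> ((\<lambda>gamma. x_gloom r mu sig delta gamma alpha beta h1 h2 / h2) \<longlongrightarrow> 1 / r) at_top"
proof (intro conjI allI impI)
  note Z0 = zal0[OF r sig delta kap_nz] zbe0[OF r sig delta kap_nz]
  show "zal r mu sig delta 0 = 1" "zbe r mu sig delta 0 = 1" using Z0 by auto
  fix gamma
  show "x_lavs r mu sig delta gamma 0 0 h1 h2 = x_peak r mu sig delta gamma 0 0 h1 h2"
    unfolding x_lavs_def x_peak_def Let_def Z0 by simp
  show "x_gloom r mu sig delta gamma 0 0 h1 h2 = x_valy r mu sig delta gamma 0 0 h1 h2"
    unfolding x_gloom_def x_valy_def Let_def Z0 by simp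
next
  show "((\<lambda>a. zal r mu sig delta a) \<longlongrightarrow> 0) (at_left (1 / delta))"
       "filterlim (\<lambda>b. zbe r mu sig delta b) at_top at_top"
    using part1[OF r sig delta kap_nz] by auto
next
  have h1: "h1 > 0" using h by linarith
  have "((\<lambda>gamma. x_lavs r mu sig delta gamma alpha beta h1 h2 / h1) \<longlongrightarrow> (h1 / r) / h1) at_top"
    by (intro tendsto_intros lavs_lim[OF r sig delta kap_nz h]) (use h1 in simp)
  thus "((\<lambda>gamma. x_lavs r mu sig delta gamma alpha beta h1 h2 / h1) \<longlongrightarrow> 1 / r) at_top"
    using h1 by simp
next
  have "((\<lambda>gamma. x_gloom r mu sig delta gamma alpha beta h1 h2 / h2) \<longlongrightarrow> (h2 / r) / h2) at_top"
    by (intro tendsto_intros gloom_lim[OF r sig delta kap_nz h]) (use h in simp)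
  thus "((\<lambda>gamma. x_gloom r mu sig delta gamma alpha beta h1 h2 / h2) \<longlongrightarrow> 1 / r) at_top"
    using h by simp
qed

end
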